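(* There exist a positive integer $N$ and a doubly-stochastic $N\times N$ matrix $A$ such that $$\mathrm{per}(A)\ <\ SD(A):=\prod_{1\le j\le N}\ \sum_{1\le i\le N}A(i,j)\prod_{m\ne i}\bigl(1-A(m,j)\bigr).$$
   Context: A doubly-stochastic matrix is an entrywise non-negative square matrix all of whose row and column sums equal $1$; $\mathrm{per}$ is the permanent. *)

theory Defs
  imports "HOL-Combinatorics.Permutations" Complex_Main
begin

text \<open>Square N x N real matrices are represented as functions nat => nat => real,
  with indices ranging over {0..<N}; entries outside this range are irrelevant.\<close>

definition doubly_stochastic :: "nat \<Rightarrow> (nat \<Rightarrow> nat \<Rightarrow> real) \<Rightarrow> bool" where
  "doubly_stochastic N A \<longleftrightarrow>
     (\<forall>i<N. \<forall>j<N. A i j \<ge> 0) \<and>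
     (\<forall>i<N. (\<Sum>j<N. A i j) = 1) \<and>
     (\<forall>j<N. (\<Sum>i<N. A i j) = 1)"

definition per :: "nat \<Rightarrow> (nat \<Rightarrow> nat \<Rightarrow> real) \<Rightarrow> real" where
  "per N A = (\<Sum>\<sigma> | \<sigma> permutes {..<N}. \<Prod>i<N. A i (\<sigma> i))"

definition SD :: "nat \<Rightarrow> (nat \<Rightarrow> nat \<Rightarrow> real) \<Rightarrow> real" where
  "SD N A = (\<Prod>j<N. \<Sum>i<N. A i j * (\<Prod>m\<in>{..<N} - {i}. 1 - A m j))"

end

theory Submission
  imports Defs
begin

definition AA :: "nat \<Rightarrow> nat \<Rightarrow> real" where
 "AA i j = (if i = 0 then (if j = 0 then 0 else 1/8) else if j = 0 then 1/8 else if j = i then 7/8 else 0)"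

lemma ds: "doubly_stochastic 9 AA"
  unfolding doubly_stochastic_def AA_def
  by (simp add: lessThan_Suc eval_nat_numeral less_Suc_eq)

lemma nz:
  assumes p: "\<sigma> permutes {..<9::nat}" and n: "(\<Prod>i<9. AA i (\<sigma> i)) \<noteq> 0"
  shows "\<sigma> = transpose 0 (\<sigma> 0) \<and> \<sigma> 0 \<in> {1..8}"
proof -
  have f: "\<And>i. i < 9 \<Longrightarrow> AA i (\<sigma> i) \<noteq> 0" using n by simp
  have inj: "inj \<sigma>" using p permutes_inj by blast
  have lt: "\<And>i. i < 9 \<Longrightarrow> \<sigma> i < 9" using p permutes_in_image by fastforce
  define j where "j = \<sigma> 0"
  have j0: "j \<noteq> 0" using f[of 0] unfolding AA_def j_def by (auto split: if_splits)
  have j9: "j < 9" using lt[of 0] j_def by simp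
  have oth: "\<And>i. 0 < i \<Longrightarrow> i < 9 \<Longrightarrow> \<sigma> i = 0 \<or> \<sigma> i = i"
  proof -
    fix i :: nat assume "0 < i" "i < 9"
    then have "AA i (\<sigma> i) \<noteq> 0" using f by simp
    then show "\<sigma> i = 0 \<or> \<sigma> i = i" using \<open>0 < i\<close> unfolding AA_def by (auto split: if_splits)
  qed
  have sj: "\<sigma> j = 0"
  proof -
    have "\<sigma> j \<noteq> j" using inj j0 j_def by (metis injD)
    thus ?thesis using oth[of j] j0 j9 by auto
  qed
  have ee: "\<And>x. \<sigma> x = transpose 0 j x"
  proof -
    fix x
    show "\<sigma> x = transpose 0 j x"
    proof (cases "x < 9")
      case False
      then have "\<sigma> x = x" using p unfolding permutes_def by auto
      moreover have "x \<noteq> 0" "x \<noteq> j" using False j9 by auto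
      ultimately show ?thesis by simp
    next
      case True
      show ?thesis
      proof (cases "x = 0")
        case True then show ?thesis using j_def by simp
      next
        case x0: False
        show ?thesis
        proof (cases "x = j")
          case True then show ?thesis using sj by simp
        next
          case False
          have "\<sigma> x \<noteq> 0" using sj False inj by (metis injD)
          then have "\<sigma> x = x" using oth[of x] x0 True by auto
          then show ?thesis using False x0 by simp
        qed
      qed
    qed
  qed
  have "\<sigma> = transpose 0 j" by (rule ext) (rule ee)
  moreover have "j \<in> {1..8}" using j0 j9 by simp
  ultimately show ?thesis unfolding j_def by simp
qed

lemma prod_T:
  assumes j: "1 \<le> j" "j \<le> (8::nat)"
  shows "(\<Prod>i<9. AA i (transpose 0 j i)) = (1/8)*(1/8)*(7/8)^7"
proof -
  let ?R = "{..<9::nat} - {0, j}"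
  have e: "{..<9::nat} = insert 0 (insert j ?R)" using j by auto
  have c: "card ?R = 7" using j by (simp add: card_Diff_subset)
  have r: "(\<Prod>i\<in>?R. AA i (transpose 0 j i)) = (\<Prod>i\<in>?R. 7/8)"
    by (rule prod.cong) (auto simp: AA_def)
  have "(\<Prod>i<9. AA i (transpose 0 j i)) = AA 0 j * (AA j 0 * (\<Prod>i\<in>?R. AA i (transpose 0 j i)))"
    using j by (subst e, simp)
  also have "\<dots> = (1/8)*(1/8)*(7/8)^7" using j r c by (simp add: AA_def)
  finally show ?thesis .
qed

lemma per_val: "per 9 AA = 8 * ((1/8) * (1/8) * (7/8)^7)"
proof -
  let ?S = "{\<sigma>. \<sigma> permutes {..<9::nat}}"
  let ?T = "(\<lambda>j. transpose 0 j) ` {1..8::nat}"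
  let ?g = "\<lambda>\<sigma>. \<Prod>i<9. AA i (\<sigma> i)"
  have TS: "?T \<subseteq> ?S" by (auto intro!: permutes_swap_id)
  have fin: "finite ?S" using finite_permutations by blast
  have "sum ?g ?S = sum ?g ?T"
    apply (rule sum.mono_neutral_right[OF fin TS])
    using nz by (smt (verit, best) DiffE image_eqI mem_Collect_eq)
  also have "\<dots> = (\<Sum>j\<in>{1..8::nat}. ?g (transpose 0 j))"
  proof (rule sum.reindex[unfolded comp_def])
    show "inj_on (\<lambda>j. transpose 0 j) {1..8::nat}"
    proof (rule inj_onI)
      fix x y :: nat assume "transpose 0 x = transpose 0 y"
      then have "transpose 0 x 0 = transpose 0 y 0" by simp
      then show "x = y" by simp
    qed
  qed
  also have "\<dots> = 8 * ((1/8) * (1/8) * (7/8)^7)"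
    by (simp add: prod_T)
  finally show ?thesis unfolding per_def by simp
qed

lemma SD_val: "SD 9 AA = (7/8)^7 * (50/64)^8"
  unfolding SD_def AA_def
  by (simp add: lessThan_Suc eval_nat_numeral insert_Diff_if)

theorem mainTheorem16:
  shows "\<exists>N::nat. N > 0 \<and> (\<exists>A. doubly_stochastic N A \<and> per N A < SD N A)"
proof -
  have "per 9 AA < SD 9 AA" unfolding per_val SD_val by (simp add: power_divide)
  then show ?thesis using ds by (intro exI[of _ 9]) auto
qed

end
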